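(* Let $E$ be an imaginary quadratic field with ring of integers $\mathfrak{o}_E$ and fundamental discriminant $\Delta_E$, and let $\iota\in\mathrm{Emb}(\mathfrak{o}_E,\mathcal{O})$. Then $\iota(\mathfrak{o}_E)=\iota(E)\cap\mathcal{O}$, and there exists an element $a\in\iota(E)\cap V_D$ with $\mathrm{Nm}(a)=-\Delta_E$. Moreover, any such element $a$ belongs to $\iota(E)\cap L(\mathcal{O})$, and $\mathbb{Z}a=\iota(E)\cap L(\mathcal{O})$.
   Context: $D$ is a definite quaternion algebra over $\mathbb{Q}$ with standard involution $\sigma$, reduced norm $\mathrm{Nm}(x)=x\sigma(x)$, trace $\mathrm{Tr}(x)=x+\sigma(x)$; $\mathcal{O}$ is an Eichler order in $D$. $V_D=\{x\in D:\mathrm{Tr}(x)=0\}$ and $L(\mathcal{O})=\{x\in\mathbb{Z}+2\mathcal{O}:\mathrm{Tr}(x)=0\}$. An embedding $E\hookrightarrow D$ is an injective $\mathbb{Q}$-algebra homomorphism; $\mathrm{Emb}(\mathfrak{o}_E,\mathcal{O})$ (optimal embeddings) is the set of embeddings $\iota:E\hookrightarrow D$ such that $\iota(E)\cap\mathcal{O}$ is isomorphic to $\mathfrak{o}_E$ as a ring. *)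

theory Defs
  imports Complex_Main "HOL-Computational_Algebra.Squarefree"
begin

text \<open>Every quaternion algebra over Q is a Hamilton algebra (alpha,beta)_Q with
  Q-basis 1,i,j,k, i^2 = alpha, j^2 = beta, k = ij = -ji; it is definite iff
  alpha < 0 and beta < 0. Elements: Quat x0 x1 x2 x3 = x0 + x1 i + x2 j + x3 k.\<close>

datatype quat = Quat rat rat rat rat

definition qof_rat :: "rat \<Rightarrow> quat" where
  "qof_rat c = Quat c 0 0 0"

definition qadd :: "quat \<Rightarrow> quat \<Rightarrow> quat" where
  "qadd x y = (case x of Quat x0 x1 x2 x3 \<Rightarrow> case y of Quat y0 y1 y2 y3 \<Rightarrow>
      Quat (x0 + y0) (x1 + y1) (x2 + y2) (x3 + y3))"

definition qscale :: "rat \<Rightarrow> quat \<Rightarrow> quat" where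
  "qscale c x = (case x of Quat x0 x1 x2 x3 \<Rightarrow> Quat (c * x0) (c * x1) (c * x2) (c * x3))"

definition qneg :: "quat \<Rightarrow> quat" where
  "qneg x = qscale (-1) x"

definition qmul :: "rat \<Rightarrow> rat \<Rightarrow> quat \<Rightarrow> quat \<Rightarrow> quat" where
  "qmul a b x y = (case x of Quat x0 x1 x2 x3 \<Rightarrow> case y of Quat y0 y1 y2 y3 \<Rightarrow>
      Quat (x0*y0 + a*x1*y1 + b*x2*y2 - a*b*x3*y3)
           (x0*y1 + x1*y0 - b*x2*y3 + b*x3*y2)
           (x0*y2 + x2*y0 + a*x1*y3 - a*x3*y1)
           (x0*y3 + x3*y0 + x1*y2 - x2*y1))"

definition qconj :: "quat \<Rightarrow> quat" where
  "qconj x = (case x of Quat x0 x1 x2 x3 \<Rightarrow> Quat x0 (-x1) (-x2) (-x3))"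

definition qNm :: "rat \<Rightarrow> rat \<Rightarrow> quat \<Rightarrow> quat" where
  "qNm a b x = qmul a b x (qconj x)"

definition qTr :: "quat \<Rightarrow> quat" where
  "qTr x = qadd x (qconj x)"

definition definite_quat_params :: "rat \<Rightarrow> rat \<Rightarrow> bool" where
  "definite_quat_params a b \<longleftrightarrow> a < 0 \<and> b < 0"

definition V_D :: "quat set" where
  "V_D = {x. qTr x = qof_rat 0}"

definition full_lattice :: "quat set \<Rightarrow> bool" where
  "full_lattice L \<longleftrightarrow> (\<exists>e :: nat \<Rightarrow> quat.
      (\<forall>c :: nat \<Rightarrow> rat. foldr qadd (map (\<lambda>i. qscale (c i) (e i)) [0..<4]) (qof_rat 0) = qof_rat 0
          \<longrightarrow> (\<forall>i<4. c i = 0)) \<and>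
      L = {foldr qadd (map (\<lambda>i. qscale (of_int (n i)) (e i)) [0..<4]) (qof_rat 0) | n :: nat \<Rightarrow> int. True})"

definition quat_order :: "rat \<Rightarrow> rat \<Rightarrow> quat set \<Rightarrow> bool" where
  "quat_order a b Ord \<longleftrightarrow> full_lattice Ord \<and> qof_rat 1 \<in> Ord \<and>
     (\<forall>x\<in>Ord. \<forall>y\<in>Ord. qadd x y \<in> Ord \<and> qmul a b x y \<in> Ord) \<and> (\<forall>x\<in>Ord. qneg x \<in> Ord)"

definition maximal_order :: "rat \<Rightarrow> rat \<Rightarrow> quat set \<Rightarrow> bool" where
  "maximal_order a b Ord \<longleftrightarrow> quat_order a b Ord \<and>
     (\<forall>Ord'. quat_order a b Ord' \<and> Ord \<subseteq> Ord' \<longrightarrow> Ord' = Ord)"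

definition eichler_order :: "rat \<Rightarrow> rat \<Rightarrow> quat set \<Rightarrow> bool" where
  "eichler_order a b Ord \<longleftrightarrow> (\<exists>O1 O2. maximal_order a b O1 \<and> maximal_order a b O2 \<and> Ord = O1 \<inter> O2)"

definition L_lattice :: "quat set \<Rightarrow> quat set" where
  "L_lattice Ord = {x. (\<exists>n::int. \<exists>y\<in>Ord. x = qadd (qof_rat (of_int n)) (qscale 2 y)) \<and> qTr x = qof_rat 0}"

text \<open>E = Q(sqrt d), d a squarefree negative integer; (x,y) represents x + y sqrt d.\<close>
definition imag_quad_param :: "int \<Rightarrow> bool" where
  "imag_quad_param d \<longleftrightarrow> d < 0 \<and> squarefree d"

definition Eadd :: "rat \<times> rat \<Rightarrow> rat \<times> rat \<Rightarrow> rat \<times> rat" where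
  "Eadd z w = (fst z + fst w, snd z + snd w)"

definition Emul :: "int \<Rightarrow> rat \<times> rat \<Rightarrow> rat \<times> rat \<Rightarrow> rat \<times> rat" where
  "Emul d z w = (fst z * fst w + of_int d * snd z * snd w, fst z * snd w + snd z * fst w)"

definition Escale :: "rat \<Rightarrow> rat \<times> rat \<Rightarrow> rat \<times> rat" where
  "Escale c z = (c * fst z, c * snd z)"

definition Eone :: "rat \<times> rat" where "Eone = (1, 0)"

fun Epow :: "int \<Rightarrow> rat \<times> rat \<Rightarrow> nat \<Rightarrow> rat \<times> rat" where
  "Epow d z 0 = Eone"
| "Epow d z (Suc n) = Emul d z (Epow d z n)"

definition ring_of_integers :: "int \<Rightarrow> (rat \<times> rat) set" where
  "ring_of_integers d = {z. \<exists>(n::nat) (c::nat \<Rightarrow> int). n > 0 \<and>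
      foldr Eadd (map (\<lambda>i. Escale (of_int (c i)) (Epow d z i)) [0..<n]) (Epow d z n) = (0, 0)}"

definition fund_disc :: "int \<Rightarrow> int" where
  "fund_disc d = (if d mod 4 = 1 then d else 4 * d)"

definition quat_embedding :: "rat \<Rightarrow> rat \<Rightarrow> int \<Rightarrow> (rat \<times> rat \<Rightarrow> quat) \<Rightarrow> bool" where
  "quat_embedding a b d \<iota> \<longleftrightarrow> inj \<iota> \<and> \<iota> Eone = qof_rat 1 \<and>
     (\<forall>z w. \<iota> (Eadd z w) = qadd (\<iota> z) (\<iota> w)) \<and>
     (\<forall>c z. \<iota> (Escale c z) = qscale c (\<iota> z)) \<and>
     (\<forall>z w. \<iota> (Emul d z w) = qmul a b (\<iota> z) (\<iota> w))"

definition optimal_embeddings :: "rat \<Rightarrow> rat \<Rightarrow> int \<Rightarrow> quat set \<Rightarrow> (rat \<times> rat \<Rightarrow> quat) set" where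
  "optimal_embeddings a b d Ord = {\<iota>. quat_embedding a b d \<iota> \<and>
     (\<exists>\<phi>. bij_betw \<phi> (ring_of_integers d) (range \<iota> \<inter> Ord) \<and> \<phi> Eone = qof_rat 1 \<and>
        (\<forall>z\<in>ring_of_integers d. \<forall>w\<in>ring_of_integers d.
            \<phi> (Eadd z w) = qadd (\<phi> z) (\<phi> w) \<and> \<phi> (Emul d z w) = qmul a b (\<phi> z) (\<phi> w)))}"

end

theory Submission
  imports Defs "HOL-Computational_Algebra.Polynomial"
begin


definition hE :: "int \<Rightarrow> rat \<times> rat \<Rightarrow> complex" where
  "hE d z = Complex (of_rat (fst z)) (of_rat (snd z) * sqrt (of_int (-d)))"

lemma of_rat_complex: "(of_rat c :: complex) = Complex (of_rat c) 0"
proof -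
  have "(of_rat c :: complex) = of_real (of_rat c)"
    by (cases c) (simp add: of_rat_rat)
  then show ?thesis by (simp add: complex_of_real_def)
qed

lemma hE_add: "hE d (Eadd z w) = hE d z + hE d w"
  by (simp add: hE_def Eadd_def of_rat_add distrib_right complex_eq_iff)

lemma hE_mul: assumes "d < 0" shows "hE d (Emul d z w) = hE d z * hE d w"
proof -
  define s where "s = sqrt (of_int (-d))"
  have s: "real_of_int d = - (s * s)" using assms by (simp add: s_def)
  have "Re (hE d (Emul d z w)) = Re (hE d z * hE d w)"
    by (simp add: hE_def Emul_def of_rat_add of_rat_mult flip: s_def) (simp add: s algebra_simps)
  moreover have "Im (hE d (Emul d z w)) = Im (hE d z * hE d w)"
    by (simp add: hE_def Emul_def of_rat_add of_rat_mult algebra_simps flip: s_def)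
  ultimately show ?thesis by (simp add: complex_eq_iff)
qed

lemma hE_scale: "hE d (Escale c z) = of_rat c * hE d z"
  by (simp add: hE_def Escale_def of_rat_mult of_rat_complex complex_eq_iff)

lemma hE_one: "hE d Eone = 1"
  by (simp add: hE_def Eone_def complex_eq_iff)

lemma hE_pow: assumes "d < 0" shows "hE d (Epow d z n) = hE d z ^ n"
  by (induction n) (simp_all add: hE_one hE_mul[OF assms])

lemma hE_inj: assumes "d < 0" and "hE d z = hE d w" shows "z = w"
proof -
  have "sqrt (of_int (-d)) > 0" using assms by simp
  with assms show ?thesis by (auto simp: hE_def complex_eq_iff prod_eq_iff)
qed

lemma hE_foldr: "hE d (foldr Eadd (map F xs) b) = sum_list (map (\<lambda>x. hE d (F x)) xs) + hE d b"
  by (induction xs) (simp_all add: hE_add)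

lemma roi_iff: assumes "d < 0"
  shows "z \<in> ring_of_integers d \<longleftrightarrow> algebraic_int (hE d z)"
proof
  assume "z \<in> ring_of_integers d"
  then obtain n c where n: "n > 0" and
    eq: "foldr Eadd (map (\<lambda>i. Escale (of_int (c i)) (Epow d z i)) [0..<n]) (Epow d z n) = (0,0)"
    unfolding ring_of_integers_def by blast
  define P :: "int poly" where "P = monom 1 n + (\<Sum>i<n. monom (c i) i)"
  have cP: "coeff P i = (if i = n then 1 else if i < n then c i else 0)" for i
    by (auto simp: P_def coeff_monom coeff_sum)
  have dP: "degree P = n"
    by (rule antisym; (rule degree_le)?) (auto simp: cP intro!: le_degree)
  have lc: "lead_coeff P = 1" using dP cP by simp
  have "hE d (0,0) = 0" by (simp add: hE_def complex_eq_iff)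
  then have "0 = hE d (foldr Eadd (map (\<lambda>i. Escale (of_int (c i)) (Epow d z i)) [0..<n]) (Epow d z n))"
    using eq by simp
  also have "\<dots> = (\<Sum>i\<leftarrow>[0..<n]. of_int (c i) * hE d z ^ i) + hE d z ^ n"
    by (simp add: hE_foldr hE_scale hE_pow[OF assms] comp_def)
  also have "\<dots> = (\<Sum>i<n. of_int (coeff P i) * hE d z ^ i) + of_int (coeff P n) * hE d z ^ n"
    by (simp add: sum_list_distinct_conv_sum_set atLeast0LessThan cP)
  also have "\<dots> = (\<Sum>i\<le>n. of_int (coeff P i) * hE d z ^ i)"
    by (simp add: lessThan_Suc_atMost[symmetric])
  also have "\<dots> = poly (map_poly of_int P) (hE d z)"
    by (simp add: poly_altdef coeff_map_poly degree_map_poly dP)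
  finally show "algebraic_int (hE d z)"
    unfolding algebraic_int_altdef_ipoly using lc by metis
next
  assume "algebraic_int (hE d z)"
  then obtain P :: "int poly" where P: "poly (map_poly of_int P) (hE d z) = 0" "lead_coeff P = 1"
    unfolding algebraic_int_altdef_ipoly by blast
  define n where "n = degree P"
  have "n > 0"
  proof (rule ccontr)
    assume "\<not> n > 0"
    then have d0: "degree P = 0" unfolding n_def by simp
    then have "coeff P 0 = 1" using P(2) by simp
    moreover have "poly (map_poly of_int P) (hE d z) = of_int (coeff P 0)"
      using d0 by (simp add: poly_altdef degree_map_poly coeff_map_poly)
    ultimately show False using P(1) by simp
  qed
  have "hE d (foldr Eadd (map (\<lambda>i. Escale (of_int (coeff P i)) (Epow d z i)) [0..<n]) (Epow d z n))
      = (\<Sum>i\<leftarrow>[0..<n]. of_int (coeff P i) * hE d z ^ i) + hE d z ^ n"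
    by (simp add: hE_foldr hE_scale hE_pow[OF assms] comp_def)
  also have "\<dots> = (\<Sum>i<n. of_int (coeff P i) * hE d z ^ i) + of_int (coeff P n) * hE d z ^ n"
    using P(2) by (simp add: n_def sum_list_distinct_conv_sum_set atLeast0LessThan)
  also have "\<dots> = poly (map_poly of_int P) (hE d z)"
    by (simp add: poly_altdef n_def coeff_map_poly degree_map_poly lessThan_Suc_atMost[symmetric])
  also have "\<dots> = hE d (0,0)" using P(1) by (simp add: hE_def complex_eq_iff)
  finally have "foldr Eadd (map (\<lambda>i. Escale (of_int (coeff P i)) (Epow d z i)) [0..<n]) (Epow d z n) = (0,0)"
    using hE_inj[OF assms] by blast
  then show "z \<in> ring_of_integers d" unfolding ring_of_integers_def using \<open>n > 0\<close> by blast
qed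


lemma map_poly_of_int_mult:
  "map_poly (of_int :: int \<Rightarrow> 'a::comm_ring_1) (p * q) = map_poly of_int p * map_poly of_int q"
  by (simp add: poly_eq_iff coeff_map_poly coeff_mult of_int_sum)

lemma map_poly_of_int_smult:
  "map_poly (of_int :: int \<Rightarrow> 'a::comm_ring_1) (smult c p) = smult (of_int c) (map_poly of_int p)"
  by (simp add: poly_eq_iff coeff_map_poly)

lemma map_poly_of_int_inj:
  assumes "map_poly (of_int :: int \<Rightarrow> 'a::ring_char_0) p = map_poly of_int q" shows "p = q"
  using assms by (simp add: poly_eq_iff coeff_map_poly)

lemma rat_poly_denom:
  fixes g :: "rat poly"
  shows "\<exists>N::int. N > 0 \<and> (\<forall>i. coeff (smult (of_int N) g) i \<in> \<int>)"
proof (induction g)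
  case 0
  then show ?case by (intro exI[of _ 1]) simp
next
  case (pCons a p)
  then obtain N where N: "N > 0" "\<forall>i. coeff (smult (of_int N) p) i \<in> \<int>" by blast
  obtain x y where xy: "quotient_of a = (x, y)" by (cases "quotient_of a")
  have y: "y > 0" using xy quotient_of_denom_pos by blast
  have a: "a = of_int x / of_int y" using xy quotient_of_div by blast
  have ay: "a * of_int y \<in> \<int>" using y a by simp
  show ?case
  proof (intro exI[of _ "N * y"] conjI allI)
    show "N * y > 0" using N y by simp
    fix i show "coeff (smult (of_int (N * y)) (pCons a p)) i \<in> \<int>"
    proof (cases i)
      case 0
      then have "coeff (smult (of_int (N * y)) (pCons a p)) i = of_int N * (a * of_int y)"
        by (simp add: algebra_simps)
      then show ?thesis using ay by (metis Ints_mult Ints_of_int)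
    next
      case (Suc j)
      have "coeff (smult (of_int (N * y)) (pCons a p)) i = (of_int N * coeff p j) * of_int y"
        using Suc by (simp add: algebra_simps)
      moreover have "of_int N * coeff p j \<in> \<int>" using N(2) by (metis coeff_smult)
      ultimately show ?thesis by (metis Ints_mult Ints_of_int)
    qed
  qed
qed

lemma ints_poly:
  fixes g :: "rat poly"
  assumes "\<forall>i. coeff g i \<in> \<int>"
  shows "\<exists>G. g = map_poly of_int G"
proof (intro exI[of _ "map_poly floor g"])
  show "g = map_poly of_int (map_poly floor g)"
    using assms by (simp add: poly_eq_iff coeff_map_poly)
qed

lemma content_monic: assumes "lead_coeff (P :: int poly) = 1" shows "content P = 1"
proof -
  have "content P dvd 1" using content_dvd_coeff[of P "degree P"] assms by simp
  moreover have "content P \<ge> 0" by (metis normalize_content abs_ge_zero normalize_int_def)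
  ultimately show ?thesis by simp
qed

lemma gauss_quad:
  fixes P :: "int poly" and t m :: rat and g :: "rat poly"
  assumes lc: "lead_coeff P = 1" and eq: "map_poly of_int P = [:m, -t, 1:] * g"
  shows "t \<in> \<int> \<and> m \<in> \<int>"
proof -
  define f where "f = [:m, -t, 1:]"
  obtain M where M: "M > 0" "\<forall>i. coeff (smult (of_int M) f) i \<in> \<int>"
    using rat_poly_denom by blast
  obtain F where F: "smult (of_int M) f = map_poly of_int F" using ints_poly[OF M(2)] by blast
  obtain N where N: "N > 0" "\<forall>i. coeff (smult (of_int N) g) i \<in> \<int>"
    using rat_poly_denom by blast
  obtain G where G: "smult (of_int N) g = map_poly of_int G" using ints_poly[OF N(2)] by blast
  have "map_poly (of_int :: int \<Rightarrow> rat) (smult (M * N) P) = map_poly of_int (F * G)"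
    by (simp add: map_poly_of_int_smult map_poly_of_int_mult eq f_def[symmetric] ac_simps flip: F G)
  then have PFG: "smult (M * N) P = F * G" by (rule map_poly_of_int_inj)
  have cP: "content P = 1" using lc by (rule content_monic)
  have "content (smult (M * N) P) = M * N" using M N cP by (simp add: content_smult)
  then have cFG: "M * N = content F * content G" by (simp add: PFG content_mult)
  define F' where "F' = primitive_part F"
  define G' where "G' = primitive_part G"
  have FF: "F = smult (content F) F'" by (simp add: F'_def)
  have GG: "G = smult (content G) G'" by (simp add: G'_def)
  have "smult (M * N) P = smult (M * N) (F' * G')"
    using PFG cFG FF GG by (metis mult_smult_left mult_smult_right smult_smult)
  then have "\<forall>i. (M * N) * coeff P i = (M * N) * coeff (F' * G') i" by (metis coeff_smult)
  then have PFG': "P = F' * G'" using M N by (simp add: poly_eq_iff)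
  have cF2: "coeff F 2 = M"
  proof -
    have "of_int (coeff F 2) = coeff (map_poly (of_int :: int \<Rightarrow> rat) F) 2" by (simp add: coeff_map_poly)
    also have "\<dots> = of_int M" by (simp flip: F add: f_def numeral_2_eq_2)
    finally show ?thesis by simp
  qed
  have cF1: "of_int (coeff F 1) = of_int M * (- t)"
  proof -
    have "of_int (coeff F 1) = coeff (map_poly (of_int :: int \<Rightarrow> rat) F) 1" by (simp add: coeff_map_poly)
    also have "\<dots> = of_int M * (-t)" by (simp flip: F add: f_def)
    finally show ?thesis .
  qed
  have cF0: "of_int (coeff F 0) = of_int M * m"
  proof -
    have "of_int (coeff F 0) = coeff (map_poly (of_int :: int \<Rightarrow> rat) F) 0" by (simp add: coeff_map_poly)
    also have "\<dots> = of_int M * m" by (simp flip: F add: f_def)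
    finally show ?thesis .
  qed
  have degF: "degree F = 2"
  proof -
    have "degree (map_poly (of_int :: int \<Rightarrow> rat) F) = 2"
      using M(1) by (simp flip: F add: f_def)
    then show ?thesis by (simp add: degree_map_poly)
  qed
  have cF: "content F > 0"
  proof -
    have "content F \<noteq> 0" using degF by auto
    moreover have "content F \<ge> 0" by (metis normalize_content abs_ge_zero normalize_int_def)
    ultimately show ?thesis by (simp add: order_less_le)
  qed
  have degF': "degree F' = 2" using degF cF FF by (metis degree_smult_eq less_irrefl)
  have "M = content F * coeff F' 2" using cF2 FF by (metis coeff_smult)
  then have lF'pos: "coeff F' 2 > 0" using M(1) cF by (simp add: zero_less_mult_iff)
  have "lead_coeff F' * lead_coeff G' = 1" using lc PFG' by (simp add: lead_coeff_mult)
  then have "coeff F' 2 = 1" using lF'pos degF' pos_zmult_eq_1_iff by auto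
  then have cFM: "content F = M" using \<open>M = content F * coeff F' 2\<close> by simp
  have t: "t = - of_int (coeff F' 1)"
  proof -
    have "of_int M * (-t) = of_int (M * coeff F' 1)" using cF1 FF cFM by (metis coeff_smult)
    then have "of_int M * (t + of_int (coeff F' 1)) = 0" by (simp add: algebra_simps)
    then have "t + of_int (coeff F' 1) = 0" using M(1) by simp
    then show ?thesis by (simp add: add_eq_0_iff)
  qed
  have m: "m = of_int (coeff F' 0)"
  proof -
    have "of_int M * m = of_int (M * coeff F' 0)" using cF0 FF cFM by (metis coeff_smult)
    then show ?thesis using M(1) by simp
  qed
  show ?thesis using t m by simp
qed


definition Sd :: "int \<Rightarrow> (rat \<times> rat) set" where
  "Sd d = (if d mod 4 = 1 then {(of_int A / 2, of_int B / 2) | A B. even (A - B)}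
           else {(of_int A, of_int B) | A B. True})"

lemma hE_const: "hE d (c, 0) = of_rat c"
  by (simp add: hE_def of_rat_complex)

lemma quad_eq:
  assumes "d < 0"
  shows "hE d z * hE d z = of_rat (2 * fst z) * hE d z - of_rat (fst z ^ 2 - of_int d * snd z ^ 2)"
proof -
  have "Emul d z z = Eadd (Escale (2 * fst z) z) (- (fst z ^ 2 - of_int d * snd z ^ 2), 0)"
    by (simp add: Emul_def Eadd_def Escale_def power2_eq_square algebra_simps)
  then have "hE d (Emul d z z) = hE d (Eadd (Escale (2 * fst z) z) (- (fst z ^ 2 - of_int d * snd z ^ 2), 0))"
    by simp
  then show ?thesis
    by (simp add: hE_mul[OF assms] hE_add hE_scale hE_const of_rat_minus of_rat_diff of_rat_mult)
qed

lemma map_poly_of_rat_mult: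
  "map_poly (of_rat :: rat \<Rightarrow> 'a::field_char_0) (p * q) = map_poly of_rat p * map_poly of_rat q"
  by (simp add: poly_eq_iff coeff_map_poly coeff_mult of_rat_sum of_rat_mult)

lemma map_poly_of_rat_add:
  "map_poly (of_rat :: rat \<Rightarrow> 'a::field_char_0) (p + q) = map_poly of_rat p + map_poly of_rat q"
  by (simp add: poly_eq_iff coeff_map_poly of_rat_add)

lemma tm_int_imp_roi:
  assumes "d < 0" and "2 * fst z \<in> \<int>" and "fst z ^ 2 - of_int d * snd z ^ 2 \<in> \<int>"
  shows "z \<in> ring_of_integers d"
proof -
  define t where "t = 2 * fst z"
  define m where "m = fst z ^ 2 - of_int d * snd z ^ 2"
  define P :: "complex poly" where "P = [:of_rat m, - of_rat t, 1:]"
  have "algebraic_int (hE d z)"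
  proof (rule algebraic_int.intros)
    show "lead_coeff P = 1" by (simp add: P_def)
    have "of_rat t \<in> (\<int> :: complex set)" "of_rat m \<in> (\<int> :: complex set)"
      using assms(2,3) unfolding t_def m_def by (auto elim!: Ints_cases)
    then show "\<forall>i. coeff P i \<in> \<int>" by (auto simp: P_def coeff_pCons split: nat.splits)
    show "poly P (hE d z) = 0"
      using quad_eq[OF assms(1), of z] by (simp add: P_def t_def m_def algebra_simps)
  qed
  then show ?thesis using roi_iff[OF assms(1)] by simp
qed

lemma Sd_sub_roi:
  assumes "d < 0" and "z \<in> Sd d"
  shows "z \<in> ring_of_integers d"
proof (cases "d mod 4 = 1")
  case True
  then obtain A B where z: "z = (of_int A / 2, of_int B / 2)" and ev: "even (A - B)"
    using assms(2) unfolding Sd_def by auto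
  obtain k where k: "A = B + 2 * k" using ev by (metis add_diff_cancel_left' dvd_def diff_add_cancel add.commute)
  obtain e where e: "d = 4 * e + 1" using True by (metis div_mult_mod_eq mult.commute)
  have "fst z ^ 2 - of_int d * snd z ^ 2 = of_int (k * k + k * B - e * B * B)"
    by (simp add: z k e power2_eq_square field_simps)
  moreover have "2 * fst z = of_int A" by (simp add: z)
  ultimately show ?thesis using tm_int_imp_roi[OF assms(1)] by (metis Ints_of_int)
next
  case False
  then obtain A B where z: "z = (of_int A, of_int B)"
    using assms(2) unfolding Sd_def by auto
  have "fst z ^ 2 - of_int d * snd z ^ 2 = of_int (A * A - d * B * B)"
    by (simp add: z power2_eq_square)
  moreover have "2 * fst z = of_int (2 * A)" by (simp add: z)
  ultimately show ?thesis using tm_int_imp_roi[OF assms(1)] by (metis Ints_of_int)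
qed


lemma arith_char:
  fixes p q :: rat and d :: int
  assumes "d < 0" "squarefree d" "2 * p \<in> \<int>" "p ^ 2 - of_int d * q ^ 2 \<in> \<int>"
  shows "(p, q) \<in> Sd d"
proof -
  obtain T where T: "2 * p = of_int T" using assms(3) by (auto elim: Ints_cases)
  obtain K where K: "p ^ 2 - of_int d * q ^ 2 = of_int K" using assms(4) by (auto elim: Ints_cases)
  define u where "u = 2 * q"
  have p: "p = of_int T / 2" using T by simp
  have du: "of_int d * u ^ 2 = of_int (T * T - 4 * K)"
  proof -
    have "of_int d * q ^ 2 = p ^ 2 - of_int K" using K by simp
    then show ?thesis by (simp add: u_def p power2_eq_square field_simps)
  qed
  obtain a b where ab: "quotient_of u = (a, b)" by (cases "quotient_of u")
  have b: "b > 0" using ab quotient_of_denom_pos by blast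
  have uab: "u = of_int a / of_int b" using ab quotient_of_div by blast
  have cop: "coprime a b" using ab quotient_of_coprime by blast
  have "of_int (d * a ^ 2) = (of_int ((T * T - 4 * K) * b ^ 2) :: rat)"
  proof -
    have "of_int d * (of_int a / of_int b) ^ 2 = (of_int (T * T - 4 * K) :: rat)" using du uab by simp
    then show ?thesis using b by (simp add: field_simps power2_eq_square)
  qed
  then have eqab: "d * a ^ 2 = (T * T - 4 * K) * b ^ 2" by (simp only: of_int_eq_iff)
  have "b ^ 2 dvd d * a ^ 2" by (simp add: eqab)
  moreover have "coprime (b ^ 2) (a ^ 2)" using cop by (simp add: coprime_commute)
  ultimately have "b ^ 2 dvd d" by (simp add: coprime_dvd_mult_left_iff)
  then have "is_unit b" using assms(2) unfolding squarefree_def by blast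
  then have "b = 1" using b by simp
  then have u: "u = of_int a" using uab by simp
  define U where "U = a"
  have q: "q = of_int U / 2" using u unfolding u_def U_def by simp
  have key: "T * T - d * U * U = 4 * K"
  proof -
    have "of_int (T * T - d * U * U) = (of_int (4 * K) :: rat)"
      using K by (simp add: p q power2_eq_square field_simps)
    then show ?thesis by (simp only: of_int_eq_iff)
  qed
  show ?thesis
  proof (cases "d mod 4 = 1")
    case True
    have "odd d" using True by (metis even_mod_4_div_2 odd_one div_by_1 mod_mod_trivial
          dvd_mod_iff dvd_refl even_numeral mod_mod_cancel)
    moreover have "even (T * T - d * U * U)" using key by simp
    ultimately have "even (T - U)" by simp
    then show ?thesis using True unfolding Sd_def p q by auto
  next
    case False
    have nz: "d mod 4 \<noteq> 0"
    proof
      assume "d mod 4 = 0"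
      then have "2 ^ 2 dvd d" by auto
      then have "is_unit (2::int)" using assms(2) unfolding squarefree_def by blast
      then show False by simp
    qed
    have "even U"
    proof (rule ccontr)
      assume "odd U"
      then obtain k where k: "U = 2 * k + 1" by (metis oddE)
      have TT: "T * T = 4 * (K + d * (k * k + k)) + d" using key by (simp add: k algebra_simps)
      show False
      proof (cases "even T")
        case True
        then obtain j where "T = 2 * j" by blast
        then have "d = 4 * (j * j - (K + d * (k * k + k)))" using TT by (simp add: algebra_simps)
        then have "4 dvd d" by (rule dvdI)
        then show False using nz by (simp add: dvd_eq_mod_eq_0)
      next
        case False
        then obtain j where "T = 2 * j + 1" by (metis oddE)
        then have "d = 4 * (j * j + j - (K + d * (k * k + k))) + 1" using TT by (simp add: algebra_simps)
        then obtain X where "d = 4 * X + 1" by blast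
        then have "d mod 4 = 1" by presburger
        then show False using \<open>d mod 4 \<noteq> 1\<close> by simp
      qed
    qed
    then obtain k where k: "U = 2 * k" by blast
    have "even (T * T)" using key by (simp add: k algebra_simps)
    then have "even T" by simp
    then obtain j where j: "T = 2 * j" by blast
    have "(p, q) = (of_int j, of_int k)" by (simp add: p q j k)
    then show ?thesis using False unfolding Sd_def by auto
  qed
qed


lemma roi_sub_Sd:
  assumes d: "d < 0" and sf: "squarefree d" and z: "z \<in> ring_of_integers d"
  shows "z \<in> Sd d"
proof -
  obtain p q where zpq: "z = (p, q)" by (cases z)
  have ai: "algebraic_int (hE d z)" using roi_iff[OF d] z by simp
  have "2 * p \<in> \<int> \<and> p ^ 2 - of_int d * q ^ 2 \<in> \<int>"
  proof (cases "q = 0")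
    case True
    then have "hE d z = of_rat p" using zpq hE_const by simp
    then have "(of_rat p :: complex) \<in> \<int>"
      using ai rational_algebraic_int_is_int[of "of_rat p :: complex"] by (simp add: Rats_of_rat)
    then obtain k where "(of_rat p :: complex) = of_int k" by (auto elim: Ints_cases)
    then have "p = of_int k" by (metis of_rat_eq_iff of_rat_of_int_eq)
    then show ?thesis using True by simp
  next
    case False
    obtain P where P: "poly (map_poly of_int P) (hE d z) = 0" "lead_coeff P = 1"
      using ai unfolding algebraic_int_altdef_ipoly by blast
    define t where "t = 2 * p"
    define m where "m = p ^ 2 - of_int d * q ^ 2"
    define f :: "rat poly" where "f = [:m, -t, 1:]"
    define PQ :: "rat poly" where "PQ = map_poly of_int P"
    define g where "g = PQ div f"
    define r where "r = PQ mod f"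
    have PQ: "PQ = g * f + r" unfolding g_def r_def by simp
    have fnz: "f \<noteq> 0" and degf: "degree f = 2" by (simp_all add: f_def)
    have degr: "degree r < 2"
      using degree_mod_less[OF fnz, of PQ] degf unfolding r_def by auto
    have req: "r = [:coeff r 0, coeff r 1:]"
      using degr by (auto simp: poly_eq_iff coeff_pCons coeff_eq_0 split: nat.splits)
    define \<zeta> where "\<zeta> = hE d z"
    have evPQ: "poly (map_poly (of_rat :: rat \<Rightarrow> complex) PQ) \<zeta> = 0"
    proof -
      have "map_poly (of_rat :: rat \<Rightarrow> complex) PQ = map_poly of_int P"
        unfolding PQ_def by (simp add: map_poly_map_poly o_def)
      then show ?thesis using P(1) by (simp add: \<zeta>_def)
    qed
    have mf: "map_poly (of_rat :: rat \<Rightarrow> complex) f = [:of_rat m, - of_rat t, 1:]"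
      by (simp add: f_def map_poly_pCons of_rat_minus)
    have qe: "\<zeta> * \<zeta> = of_rat t * \<zeta> - of_rat m"
      using quad_eq[OF d, of z] by (simp add: \<zeta>_def t_def m_def zpq)
    have "poly (map_poly (of_rat :: rat \<Rightarrow> complex) f) \<zeta> = of_rat m - of_rat t * \<zeta> + \<zeta> * \<zeta>"
      by (simp add: mf algebra_simps)
    also have "\<dots> = 0" by (simp add: qe)
    finally have evf: "poly (map_poly (of_rat :: rat \<Rightarrow> complex) f) \<zeta> = 0" .
    have "poly (map_poly (of_rat :: rat \<Rightarrow> complex) r) \<zeta> = 0"
      using evPQ evf PQ by (simp add: map_poly_of_rat_add map_poly_of_rat_mult)
    then have ev: "of_rat (coeff r 0) + of_rat (coeff r 1) * \<zeta> = (0 :: complex)"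
      by (subst (asm) req) (auto simp: map_poly_pCons mult.commute split: if_splits)
    have s: "sqrt (of_int (-d)) > 0" using d by simp
    have imc: "Im (of_rat (coeff r 0) + of_rat (coeff r 1) * \<zeta>) = of_rat (coeff r 1) * (of_rat q * sqrt (of_int (-d)))"
      by (simp add: of_rat_complex \<zeta>_def hE_def zpq)
    have im: "Im (of_rat (coeff r 0) + of_rat (coeff r 1) * \<zeta>) = 0" by (subst ev) simp
    have "(of_rat (coeff r 1) :: real) * (of_rat q * sqrt (of_int (-d))) = 0" using imc im by simp
    then have "coeff r 1 = 0" using False s by simp
    then have "coeff r 0 = 0" using ev by simp
    then have "r = 0" using req \<open>coeff r 1 = 0\<close> by simp
    then have "map_poly of_int P = [:m, -t, 1:] * g" using PQ by (simp add: PQ_def f_def mult.commute)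
    then show ?thesis using gauss_quad[OF P(2)] unfolding t_def m_def by blast
  qed
  then show ?thesis using arith_char[OF d sf] zpq by blast
qed

lemma roi_eq_Sd:
  assumes "d < 0" and "squarefree d"
  shows "ring_of_integers d = Sd d"
  using roi_sub_Sd[OF assms] Sd_sub_roi[OF assms(1)] by blast


lemma qof_rat_eq: "qof_rat c = Quat c 0 0 0" by (simp add: qof_rat_def)

lemma iota_form:
  assumes emb: "quat_embedding a b d \<iota>" and d: "d < 0"
  shows "\<exists>y1 y2 y3. a * y1^2 + b * y2^2 - a * b * y3^2 = of_int d \<and>
           (\<forall>p q. \<iota> (p, q) = Quat p (q * y1) (q * y2) (q * y3))"
proof -
  obtain x0 x1 x2 x3 where th: "\<iota> (0, 1) = Quat x0 x1 x2 x3" by (cases "\<iota> (0, 1)")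
  have hom: "\<And>z w. \<iota> (Eadd z w) = qadd (\<iota> z) (\<iota> w)"
    "\<And>c z. \<iota> (Escale c z) = qscale c (\<iota> z)"
    "\<And>z w. \<iota> (Emul d z w) = qmul a b (\<iota> z) (\<iota> w)" "\<iota> Eone = qof_rat 1"
    using emb unfolding quat_embedding_def by auto
  have "Emul d (0, 1) (0, 1) = Escale (of_int d) Eone" by (simp add: Emul_def Escale_def Eone_def)
  then have "qmul a b (\<iota> (0, 1)) (\<iota> (0, 1)) = qscale (of_int d) (qof_rat 1)"
    using hom by metis
  then have eqs: "x0*x0 + a*x1*x1 + b*x2*x2 - a*b*x3*x3 = of_int d"
      "x0*x1 = 0" "x0*x2 = 0" "x0*x3 = 0"
    by (simp_all add: th qmul_def qscale_def qof_rat_def algebra_simps)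
  have x0: "x0 = 0"
  proof (rule ccontr)
    assume "x0 \<noteq> 0"
    then have "x1 = 0" "x2 = 0" "x3 = 0" using eqs by auto
    then have "x0 * x0 = of_int d" using eqs(1) by simp
    moreover have "x0 * x0 \<ge> 0" by simp
    ultimately show False using d by simp
  qed
  have form: "\<iota> (p, q) = Quat p (q * x1) (q * x2) (q * x3)" for p q
  proof -
    have "(p, q) = Eadd (Escale p Eone) (Escale q (0, 1))" by (simp add: Eadd_def Escale_def Eone_def)
    then have "\<iota> (p, q) = qadd (qscale p (qof_rat 1)) (qscale q (\<iota> (0, 1)))" using hom by metis
    then show ?thesis by (simp add: th x0 qadd_def qscale_def qof_rat_def)
  qed
  show ?thesis using eqs(1) x0 form by (intro exI[of _ x1] exI[of _ x2] exI[of _ x3]) (simp add: power2_eq_square)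
qed

lemma order_props:
  assumes "eichler_order a b Ord"
  shows "qof_rat 1 \<in> Ord" "\<And>x y. x \<in> Ord \<Longrightarrow> y \<in> Ord \<Longrightarrow> qadd x y \<in> Ord"
    "\<And>x y. x \<in> Ord \<Longrightarrow> y \<in> Ord \<Longrightarrow> qmul a b x y \<in> Ord" "\<And>x. x \<in> Ord \<Longrightarrow> qneg x \<in> Ord"
  using assms unfolding eichler_order_def maximal_order_def quat_order_def by auto


definition w0 :: "int \<Rightarrow> rat \<times> rat" where
  "w0 d = (if d mod 4 = 1 then (1/2, 1/2) else (0, 1))"

lemma Sd1: "d mod 4 = 1 \<Longrightarrow> Sd d = {(of_int A / 2, of_int B / 2) | A B. even (A - B)}"
  by (simp add: Sd_def)
lemma Sd2: "d mod 4 \<noteq> 1 \<Longrightarrow> Sd d = {(of_int A, of_int B) | A B. True}"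
  by (simp add: Sd_def)

locale LS =
  fixes a b :: rat and d :: int and \<iota> :: "rat \<times> rat \<Rightarrow> quat" and Ord :: "quat set"
    and y1 y2 y3 :: rat and \<phi> :: "rat \<times> rat \<Rightarrow> quat"
  assumes dneg: "d < 0"
  and iota: "\<And>p q. \<iota> (p, q) = Quat p (q * y1) (q * y2) (q * y3)"
  and yd: "a * y1^2 + b * y2^2 - a * b * y3^2 = of_int d"
  and emb: "quat_embedding a b d \<iota>"
  and O1: "qof_rat 1 \<in> Ord"
  and Oadd: "\<And>x y. x \<in> Ord \<Longrightarrow> y \<in> Ord \<Longrightarrow> qadd x y \<in> Ord"
  and Oneg: "\<And>x. x \<in> Ord \<Longrightarrow> qneg x \<in> Ord"
  and phibij: "bij_betw \<phi> (Sd d) (range \<iota> \<inter> Ord)"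
  and phi1: "\<phi> Eone = qof_rat 1"
  and phihom: "\<And>z w. z \<in> Sd d \<Longrightarrow> w \<in> Sd d \<Longrightarrow>
      \<phi> (Eadd z w) = qadd (\<phi> z) (\<phi> w) \<and> \<phi> (Emul d z w) = qmul a b (\<phi> z) (\<phi> w)"
begin

lemma i_add: "\<iota> (Eadd z w) = qadd (\<iota> z) (\<iota> w)"
  using emb unfolding quat_embedding_def by blast
lemma i_mul: "\<iota> (Emul d z w) = qmul a b (\<iota> z) (\<iota> w)"
  using emb unfolding quat_embedding_def by blast
lemma i_inj: "inj \<iota>"
  using emb unfolding quat_embedding_def by blast

lemma i_eq: "\<iota> z = \<iota> w \<Longrightarrow> z = w" using i_inj by (simp add: inj_eq)

lemma O0: "Quat 0 0 0 0 \<in> Ord"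
proof -
  have "qadd (qof_rat 1) (qneg (qof_rat 1)) \<in> Ord" using O1 Oadd Oneg by blast
  then show ?thesis by (simp add: qadd_def qneg_def qscale_def qof_rat_def)
qed

lemma Oscale_nat: "x \<in> Ord \<Longrightarrow> qscale (of_nat n) x \<in> Ord"
proof (induction n)
  case 0
  then show ?case using O0 by (cases x) (simp add: qscale_def)
next
  case (Suc n)
  then have "qadd (qscale (of_nat n) x) x \<in> Ord" using Oadd by blast
  moreover have "qadd (qscale (of_nat n) x) x = qscale (of_nat (Suc n)) x"
    by (cases x) (simp add: qadd_def qscale_def algebra_simps)
  ultimately show ?case by simp
qed

lemma Oscale: assumes "x \<in> Ord" shows "qscale (of_int n) x \<in> Ord"
proof (cases "n \<ge> 0")
  case True
  then have "qscale (of_int n) x = qscale (of_nat (nat n)) x" by simp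
  then show ?thesis using Oscale_nat[OF assms] by simp
next
  case False
  then have "qscale (of_int n) x = qneg (qscale (of_nat (nat (-n))) x)"
    by (cases x) (simp add: qneg_def qscale_def)
  then show ?thesis using Oscale_nat[OF assms] Oneg by simp
qed

lemma Oint: "qof_rat (of_int n) \<in> Ord"
proof -
  have "qof_rat (of_int n) = qscale (of_int n) (qof_rat 1)" by (simp add: qscale_def qof_rat_def)
  then show ?thesis using Oscale[OF O1] by simp
qed

lemma Sd_int: "(of_int k, 0) \<in> Sd d"
proof (cases "d mod 4 = 1")
  case True
  have "(of_int k :: rat, 0 :: rat) = (of_int (2 * k) / 2, of_int 0 / 2)" by simp
  moreover have "even (2 * k - 0)" by simp
  ultimately show ?thesis unfolding Sd1[OF True] by blast
next
  case False
  then show ?thesis unfolding Sd_def by auto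
qed

lemma Sd_w0: "w0 d \<in> Sd d"
  unfolding Sd_def w0_def by (auto intro!: exI[of _ 1] exI[of _ 0])

lemma Sd_zero: "(0, 0) \<in> Sd d" using Sd_int[of 0] by simp

lemma phi_in: "z \<in> Sd d \<Longrightarrow> \<phi> z \<in> range \<iota> \<inter> Ord"
  using phibij by (auto simp: bij_betw_def)

lemma phi0: "\<phi> (0, 0) = Quat 0 0 0 0"
proof -
  have "\<phi> (Eadd (0,0) (0,0)) = qadd (\<phi> (0,0)) (\<phi> (0,0))" using phihom[OF Sd_zero Sd_zero] by blast
  then have "\<phi> (0,0) = qadd (\<phi> (0,0)) (\<phi> (0,0))" by (simp add: Eadd_def)
  then show ?thesis by (cases "\<phi> (0,0)") (simp add: qadd_def)
qed

lemma phi_nat: "\<phi> (of_nat n, 0) = qof_rat (of_nat n)"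
proof (induction n)
  case 0
  then show ?case using phi0 by (simp add: qof_rat_def)
next
  case (Suc n)
  have "Eadd (of_nat n, 0) Eone = (of_nat (Suc n), 0)" by (simp add: Eadd_def Eone_def)
  moreover have "Eone \<in> Sd d" using Sd_int[of 1] by (simp add: Eone_def)
  moreover have "(of_nat n, 0) \<in> Sd d" using Sd_int[of "int n"] by simp
  ultimately have "\<phi> (of_nat (Suc n), 0) = qadd (\<phi> (of_nat n, 0)) (\<phi> Eone)" using phihom by metis
  then show ?case using Suc phi1 by (simp add: qadd_def qof_rat_def)
qed

lemma phi_int: "\<phi> (of_int k, 0) = qof_rat (of_int k)"
proof (cases "k \<ge> 0")
  case True
  then show ?thesis using phi_nat[of "nat k"] by simp
next
  case False
  define n where "n = nat (-k)"
  have k: "of_int k = - (of_nat n :: rat)" using False by (simp add: n_def)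
  have "Eadd (of_int k, 0) (of_nat n, 0) = (0, 0)" by (simp add: Eadd_def k)
  moreover have "(of_int k, 0) \<in> Sd d" by (rule Sd_int)
  moreover have "(of_nat n, 0) \<in> Sd d" using Sd_int[of "int n"] by simp
  ultimately have "qadd (\<phi> (of_int k, 0)) (\<phi> (of_nat n, 0)) = Quat 0 0 0 0" using phihom phi0 by metis
  then have "qadd (\<phi> (of_int k, 0)) (qof_rat (of_nat n)) = Quat 0 0 0 0" using phi_nat by simp
  then show ?thesis by (cases "\<phi> (of_int k, 0)") (simp add: qadd_def qof_rat_def k)
qed

lemma iota_const: "\<iota> (c, 0) = qof_rat c" by (simp add: iota qof_rat_def)

end


lemma Sd1I: "d mod 4 = 1 \<Longrightarrow> z = (of_int A / 2, of_int B / 2) \<Longrightarrow> even (A - B) \<Longrightarrow> z \<in> Sd d"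
  unfolding Sd1 by blast
lemma Sd2I: "d mod 4 \<noteq> 1 \<Longrightarrow> z = (of_int A, of_int B) \<Longrightarrow> z \<in> Sd d"
  unfolding Sd2 by blast
lemma Sd1E: assumes "d mod 4 = 1" "z \<in> Sd d"
  obtains A B where "z = (of_int A / 2, of_int B / 2)" "even (A - B)"
  using assms unfolding Sd1[OF assms(1)] by blast
lemma Sd2E: assumes "d mod 4 \<noteq> 1" "z \<in> Sd d"
  obtains A B where "z = (of_int A, of_int B)"
  using assms unfolding Sd2[OF assms(1)] by blast

context LS
begin

lemma i_scale: "\<iota> (Escale c z) = qscale c (\<iota> z)"
  using emb unfolding quat_embedding_def by blast

lemma phi_w:
  obtains v where "\<phi> (w0 d) = \<iota> v" "\<iota> v \<in> Ord"
    "if d mod 4 = 1 then v = (1/2, 1/2) \<or> v = (1/2, -1/2) else v = (0, 1) \<or> v = (0, -1)"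
proof -
  obtain v where v: "\<phi> (w0 d) = \<iota> v" and vO: "\<iota> v \<in> Ord" using phi_in[OF Sd_w0] by auto
  obtain p q where vpq: "v = (p, q)" by (cases v)
  have "if d mod 4 = 1 then v = (1/2, 1/2) \<or> v = (1/2, -1/2) else v = (0, 1) \<or> v = (0, -1)"
  proof (cases "d mod 4 = 1")
    case True
    obtain e where e: "d = 4 * e + 1" using True by (metis div_mult_mod_eq mult.commute)
    have w: "w0 d = (1/2, 1/2)" using True by (simp add: w0_def)
    have em: "Emul d (w0 d) (w0 d) = Eadd (w0 d) (of_int e, 0)"
      unfolding w by (simp add: Emul_def Eadd_def e field_simps)
    have "qmul a b (\<phi> (w0 d)) (\<phi> (w0 d)) = qadd (\<phi> (w0 d)) (\<phi> (of_int e, 0))"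
      using phihom[OF Sd_w0 Sd_w0] phihom[OF Sd_w0 Sd_int] em by metis
    then have "\<iota> (Emul d v v) = \<iota> (Eadd v (of_int e, 0))"
      by (simp add: v i_mul i_add phi_int iota_const)
    then have "Emul d v v = Eadd v (of_int e, 0)" by (rule i_eq)
    then have eq1: "p * p + of_int d * q * q = p + of_int e" and eq2: "p * q + q * p = q"
      by (simp_all add: vpq Emul_def Eadd_def)
    have "q \<noteq> 0"
    proof
      assume "q = 0"
      then have "(2 * p - 1)^2 = of_int d" using eq1 e by (simp add: power2_eq_square algebra_simps)
      moreover have "(2 * p - 1)^2 \<ge> 0" by simp
      ultimately show False using dneg by simp
    qed
    then have p: "p = 1/2" using eq2 by (simp add: field_simps)
    have "of_int d * (q * q) = 1/4 + of_int e" using eq1 p by (simp add: algebra_simps)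
    also have "\<dots> = of_int d * (1/4)" using e by simp
    finally have "of_int d * (q * q) = of_int d * (1/4)" .
    then have "q * q = 1/4" using dneg by simp
    then have "(q - 1/2) * (q + 1/2) = 0" by (simp add: algebra_simps)
    then have "q = 1/2 \<or> q = -1/2" by auto
    then show ?thesis using True p vpq by auto
  next
    case False
    have w: "w0 d = (0, 1)" using False by (simp add: w0_def)
    have em: "Emul d (w0 d) (w0 d) = (of_int d, 0)"
      by (simp add: w Emul_def)
    have "qmul a b (\<phi> (w0 d)) (\<phi> (w0 d)) = \<phi> (of_int d, 0)"
      using phihom[OF Sd_w0 Sd_w0] em by metis
    then have "\<iota> (Emul d v v) = \<iota> (of_int d, 0)"
      by (simp add: v i_mul phi_int iota_const)
    then have "Emul d v v = (of_int d, 0)" by (rule i_eq)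
    then have eq1: "p * p + of_int d * q * q = of_int d" and eq2: "p * q + q * p = 0"
      by (simp_all add: vpq Emul_def)
    have "p = 0"
    proof (rule ccontr)
      assume "p \<noteq> 0"
      then have "q = 0" using eq2 by simp
      then have "p * p = of_int d" using eq1 by simp
      moreover have "p * p \<ge> 0" by simp
      ultimately show False using dneg by simp
    qed
    then have "of_int d * (q * q) = of_int d * 1" using eq1 by (simp add: algebra_simps)
    then have "q * q = 1" using dneg by simp
    then have "(q - 1) * (q + 1) = 0" by (simp add: algebra_simps)
    then have "q = 1 \<or> q = -1" by auto
    then show ?thesis using False \<open>p = 0\<close> vpq by auto
  qed
  then show ?thesis using that v vO by blast
qed

lemma Sd_sub_Ord: assumes "u \<in> Sd d" shows "\<iota> u \<in> Ord"
proof -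
  obtain v where v: "\<iota> v \<in> Ord"
    and vv: "if d mod 4 = 1 then v = (1/2, 1/2) \<or> v = (1/2, -1/2) else v = (0, 1) \<or> v = (0, -1)"
    using phi_w by blast
  have key: "\<iota> u = qadd (qof_rat (of_int m)) (qscale (of_int n) (\<iota> v)) \<Longrightarrow> \<iota> u \<in> Ord" for m n
    using Oadd[OF Oint Oscale[OF v]] by simp
  show ?thesis
  proof (cases "d mod 4 = 1")
    case True
    obtain A B where u: "u = (of_int A / 2, of_int B / 2)" and ev: "even (A - B)"
      using Sd1E[OF True assms] by blast
    obtain k where k: "A - B = 2 * k" using ev by blast
    have k': "A + B = 2 * (k + B)" using k by simp
    from vv True have "v = (1/2, 1/2) \<or> v = (1/2, -1/2)" by simp
    then show ?thesis
    proof
      assume "v = (1/2, 1/2)"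
      then have "\<iota> u = qadd (qof_rat (of_int k)) (qscale (of_int B) (\<iota> v))"
        using k by (simp add: u iota qadd_def qscale_def qof_rat_def field_simps,
          (simp flip: of_int_add of_int_mult add: algebra_simps)?)
      then show ?thesis by (rule key)
    next
      assume "v = (1/2, -1/2)"
      then have "\<iota> u = qadd (qof_rat (of_int (k + B))) (qscale (of_int (-B)) (\<iota> v))"
        using k' by (simp add: u iota qadd_def qscale_def qof_rat_def field_simps,
          (simp flip: of_int_add of_int_mult add: algebra_simps)?)
      then show ?thesis by (rule key)
    qed
  next
    case False
    obtain A B where u: "u = (of_int A, of_int B)" using Sd2E[OF False assms] by blast
    from vv False have "v = (0, 1) \<or> v = (0, -1)" by simp
    then show ?thesis
    proof
      assume "v = (0, 1)"
      then have "\<iota> u = qadd (qof_rat (of_int A)) (qscale (of_int B) (\<iota> v))"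
        by (simp add: u iota qadd_def qscale_def qof_rat_def)
      then show ?thesis by (rule key)
    next
      assume "v = (0, -1)"
      then have "\<iota> u = qadd (qof_rat (of_int A)) (qscale (of_int (-B)) (\<iota> v))"
        by (simp add: u iota qadd_def qscale_def qof_rat_def)
      then show ?thesis by (rule key)
    qed
  qed
qed

lemma Ord_sub_Sd: assumes "y \<in> range \<iota> \<inter> Ord" shows "y \<in> \<iota> ` Sd d"
proof -
  have "y \<in> \<phi> ` Sd d" using assms phibij by (simp add: bij_betw_def)
  then obtain u where uS: "u \<in> Sd d" and y: "y = \<phi> u" by blast
  obtain v where v: "\<phi> (w0 d) = \<iota> v"
    and vv: "if d mod 4 = 1 then v = (1/2, 1/2) \<or> v = (1/2, -1/2) else v = (0, 1) \<or> v = (0, -1)"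
    using phi_w by blast
  have key: "y = \<iota> (Eadd (of_int m, 0) (Emul d (of_int n, 0) v))"
    if "u = Eadd (of_int m, 0) (Emul d (of_int n, 0) (w0 d))" for m n
  proof -
    have mS: "Emul d (of_int n, 0) (w0 d) \<in> Sd d"
    proof (cases "d mod 4 = 1")
      case True
      show ?thesis by (rule Sd1I[OF True, of _ n n]) (simp_all add: Emul_def w0_def True)
    next
      case False
      show ?thesis by (rule Sd2I[OF False, of _ 0 n]) (simp_all add: Emul_def w0_def False)
    qed
    have "y = qadd (\<phi> (of_int m, 0)) (qmul a b (\<phi> (of_int n, 0)) (\<phi> (w0 d)))"
      using y that phihom[OF Sd_int mS] phihom[OF Sd_int Sd_w0] by metis
    then show ?thesis by (simp add: phi_int v i_add i_mul iota_const)
  qed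
  show ?thesis
  proof (cases "d mod 4 = 1")
    case True
    obtain A B where u: "u = (of_int A / 2, of_int B / 2)" and ev: "even (A - B)"
      using Sd1E[OF True uS] by blast
    obtain k where k: "A - B = 2 * k" using ev by blast
    have "u = Eadd (of_int k, 0) (Emul d (of_int B, 0) (w0 d))"
      using k by (simp add: u Eadd_def Emul_def w0_def True field_simps,
        (simp flip: of_int_add of_int_mult add: algebra_simps)?)
    then have yv: "y = \<iota> (Eadd (of_int k, 0) (Emul d (of_int B, 0) v))" by (rule key)
    from vv True have "v = (1/2, 1/2) \<or> v = (1/2, -1/2)" by simp
    then have "Eadd (of_int k, 0) (Emul d (of_int B, 0) v) \<in> Sd d"
    proof
      assume "v = (1/2, 1/2)"
      then show ?thesis
        by (intro Sd1I[OF True, of _ "2 * k + B" B]) (simp_all add: Eadd_def Emul_def field_simps)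
    next
      assume "v = (1/2, -1/2)"
      then show ?thesis
        by (intro Sd1I[OF True, of _ "2 * k + B" "- B"]) (simp_all add: Eadd_def Emul_def field_simps)
    qed
    then show ?thesis using yv by blast
  next
    case False
    obtain A B where u: "u = (of_int A, of_int B)" using Sd2E[OF False uS] by blast
    have "u = Eadd (of_int A, 0) (Emul d (of_int B, 0) (w0 d))"
      by (simp add: u Eadd_def Emul_def w0_def False)
    then have yv: "y = \<iota> (Eadd (of_int A, 0) (Emul d (of_int B, 0) v))" by (rule key)
    from vv False have "v = (0, 1) \<or> v = (0, -1)" by simp
    then have "Eadd (of_int A, 0) (Emul d (of_int B, 0) v) \<in> Sd d"
    proof
      assume "v = (0, 1)"
      then show ?thesis by (intro Sd2I[OF False, of _ A B]) (simp_all add: Eadd_def Emul_def)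
    next
      assume "v = (0, -1)"
      then show ?thesis by (intro Sd2I[OF False, of _ A "- B"]) (simp_all add: Eadd_def Emul_def)
    qed
    then show ?thesis using yv by blast
  qed
qed

lemma part1: "\<iota> ` Sd d = range \<iota> \<inter> Ord"
  using Sd_sub_Ord Ord_sub_Sd by blast

end


context LS
begin

definition c0 :: rat where "c0 = (if d mod 4 = 1 then 1 else 2)"

lemma tr_iota: "qTr (\<iota> (p, q)) = Quat (2 * p) 0 0 0"
  by (simp add: iota qTr_def qadd_def qconj_def)

lemma nm_iota: "qNm a b (\<iota> (0, c)) = qof_rat (- (c * c) * of_int d)"
proof -
  have "qNm a b (\<iota> (0, c)) = Quat (- (c * c) * (a * y1^2 + b * y2^2 - a * b * y3^2)) 0 0 0"
    by (simp add: iota qNm_def qmul_def qconj_def power2_eq_square algebra_simps)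
  then show ?thesis by (simp add: yd qof_rat_def)
qed

lemma fd: "of_int (fund_disc d) = c0 * c0 * of_int d"
  by (simp add: fund_disc_def c0_def)

lemma part2: "\<exists>x \<in> range \<iota> \<inter> V_D. qNm a b x = qof_rat (- of_int (fund_disc d))"
proof (intro bexI)
  show "qNm a b (\<iota> (0, c0)) = qof_rat (- of_int (fund_disc d))" by (simp add: nm_iota fd)
  show "\<iota> (0, c0) \<in> range \<iota> \<inter> V_D" by (simp add: V_D_def tr_iota qof_rat_def)
qed

lemma L_iff: "y \<in> range \<iota> \<inter> L_lattice Ord \<longleftrightarrow> (\<exists>R::int. y = \<iota> (0, c0 * of_int R))"
proof
  assume "\<exists>R::int. y = \<iota> (0, c0 * of_int R)"
  then obtain R where y: "y = \<iota> (0, c0 * of_int R)" by blast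
  have tr: "qTr y = qof_rat 0" by (simp add: y tr_iota qof_rat_def)
  have "\<exists>n::int. \<exists>w\<in>Ord. y = qadd (qof_rat (of_int n)) (qscale 2 w)"
  proof (cases "d mod 4 = 1")
    case True
    have "(of_int R / 2, of_int R / 2) \<in> Sd d" by (rule Sd1I[OF True, of _ R R]) simp_all
    then have w: "\<iota> (of_int R / 2, of_int R / 2) \<in> Ord" by (rule Sd_sub_Ord)
    have "y = qadd (qof_rat (of_int (- R))) (qscale 2 (\<iota> (of_int R / 2, of_int R / 2)))"
      by (simp add: y c0_def True iota qadd_def qscale_def qof_rat_def)
    then show ?thesis using w by blast
  next
    case False
    have "(0, of_int R) \<in> Sd d" by (rule Sd2I[OF False, of _ 0 R]) simp
    then have w: "\<iota> (0, of_int R) \<in> Ord" by (rule Sd_sub_Ord)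
    have "y = qadd (qof_rat (of_int 0)) (qscale 2 (\<iota> (0, of_int R)))"
      by (simp add: y c0_def False iota qadd_def qscale_def qof_rat_def)
    then show ?thesis using w by blast
  qed
  then have "y \<in> L_lattice Ord" using tr unfolding L_lattice_def by (intro CollectI conjI)
  moreover have "y \<in> range \<iota>" using y by simp
  ultimately show "y \<in> range \<iota> \<inter> L_lattice Ord" by (rule IntI[rotated])
next
  assume yL: "y \<in> range \<iota> \<inter> L_lattice Ord"
  then obtain z where "y = \<iota> z" by (auto elim: rangeE)
  then obtain p0 q0 where y: "y = \<iota> (p0, q0)" by (cases z) simp
  from yL have "y \<in> L_lattice Ord" by (rule IntD2)
  then have yL': "(\<exists>n::int. \<exists>w\<in>Ord. y = qadd (qof_rat (of_int n)) (qscale 2 w)) \<and> qTr y = qof_rat 0"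
    unfolding L_lattice_def by (rule CollectD)
  then obtain k w where w: "w \<in> Ord" and yw: "y = qadd (qof_rat (of_int k)) (qscale 2 w)"
    by blast
  have tr: "qTr y = qof_rat 0" using yL' by (rule conjunct2)
  have p0: "p0 = 0" using tr by (simp add: y tr_iota qof_rat_def)
  obtain w0' w1 w2 w3 where wq: "w = Quat w0' w1 w2 w3" by (cases w)
  have "w = \<iota> (- of_int k / 2, q0 / 2)"
    using yw by (simp add: y p0 wq iota qadd_def qscale_def qof_rat_def field_simps)
  then have "\<iota> (- of_int k / 2, q0 / 2) \<in> range \<iota> \<inter> Ord" using w by simp
  then have "\<iota> (- of_int k / 2, q0 / 2) \<in> \<iota> ` Sd d" by (rule Ord_sub_Sd)
  then have S: "(- of_int k / 2, q0 / 2) \<in> Sd d" using i_inj by (simp add: inj_image_mem_iff)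
  show "\<exists>R::int. y = \<iota> (0, c0 * of_int R)"
  proof (cases "d mod 4 = 1")
    case True
    obtain A B where "(- of_int k / 2 :: rat, q0 / 2) = (of_int A / 2 :: rat, of_int B / 2 :: rat)" "even (A - B)"
      by (rule Sd1E[OF True S])
    then have "q0 / 2 = of_int B / 2" by simp
    then have "q0 = of_int B" by simp
    then have "y = \<iota> (0, c0 * of_int B)" by (simp add: y p0 c0_def True)
    then show ?thesis by blast
  next
    case False
    obtain A B where "(- of_int k / 2 :: rat, q0 / 2) = (of_int A :: rat, of_int B :: rat)"
      by (rule Sd2E[OF False S])
    then have "q0 / 2 = of_int B" by simp
    then have "q0 = 2 * of_int B" by simp
    then have "y = \<iota> (0, c0 * of_int B)" by (simp add: y p0 c0_def False)
    then show ?thesis by blast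
  qed
qed

lemma part3:
  assumes x: "x \<in> range \<iota> \<inter> V_D" and nm: "qNm a b x = qof_rat (- of_int (fund_disc d))"
  shows "x \<in> range \<iota> \<inter> L_lattice Ord \<and>
         {qscale (of_int n) x | n :: int. True} = range \<iota> \<inter> L_lattice Ord"
proof -
  obtain p q where xpq: "x = \<iota> (p, q)" using x by auto
  have p: "p = 0" using x by (simp add: xpq V_D_def tr_iota qof_rat_def)
  have "qof_rat (- (q * q) * of_int d) = qof_rat (- (c0 * c0 * of_int d))"
    using nm by (simp add: xpq p nm_iota fd)
  then have "q * q * of_int d = c0 * c0 * of_int d" by (simp add: qof_rat_def)
  then have "q * q = c0 * c0" using dneg by simp
  then have "(q - c0) * (q + c0) = 0" by (simp add: algebra_simps)
  then have qc: "q = c0 \<or> q = - c0" by (auto simp: add_eq_0_iff)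
  have sc: "qscale c (\<iota> (0, r)) = \<iota> (0, c * r)" for c r by (simp add: iota qscale_def)
  have "\<exists>R::int. x = \<iota> (0, c0 * of_int R)"
  proof (cases "q = c0")
    case True
    then show ?thesis by (intro exI[of _ 1]) (simp add: xpq p)
  next
    case False
    then have "q = - c0" using qc by simp
    then show ?thesis by (intro exI[of _ "-1"]) (simp add: xpq p)
  qed
  then have xL: "x \<in> range \<iota> \<inter> L_lattice Ord" using L_iff by blast
  have "{qscale (of_int n) x | n :: int. True} = {\<iota> (0, c0 * of_int R) | R :: int. True}"
  proof (rule set_eqI, rule iffI)
    fix y assume "y \<in> {qscale (of_int n) x | n :: int. True}"
    then obtain n :: int where "y = qscale (of_int n) x" by blast
    then have "y = \<iota> (0, c0 * of_int (if q = c0 then n else - n))"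
      using qc by (auto simp: xpq p sc mult.commute)
    then show "y \<in> {\<iota> (0, c0 * of_int R) | R :: int. True}" by blast
  next
    fix y assume "y \<in> {\<iota> (0, c0 * of_int R) | R :: int. True}"
    then obtain R :: int where "y = \<iota> (0, c0 * of_int R)" by blast
    then have "y = qscale (of_int (if q = c0 then R else - R)) x"
      using qc by (auto simp: xpq p sc mult.commute)
    then show "y \<in> {qscale (of_int n) x | n :: int. True}" by blast
  qed
  also have "\<dots> = range \<iota> \<inter> L_lattice Ord" using L_iff by blast
  finally show ?thesis using xL by blast
qed

end

theorem lemma3p2:
  fixes a b :: rat and Ord :: "quat set" and d :: int and \<iota> :: "rat \<times> rat \<Rightarrow> quat"
  assumes "definite_quat_params a b"
    and "eichler_order a b Ord"
    and "imag_quad_param d"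
    and "\<iota> \<in> optimal_embeddings a b d Ord"
  shows "\<iota> ` ring_of_integers d = range \<iota> \<inter> Ord
    \<and> (\<exists>x \<in> range \<iota> \<inter> V_D. qNm a b x = qof_rat (- of_int (fund_disc d)))
    \<and> (\<forall>x \<in> range \<iota> \<inter> V_D. qNm a b x = qof_rat (- of_int (fund_disc d)) \<longrightarrow>
         x \<in> range \<iota> \<inter> L_lattice Ord \<and>
         {qscale (of_int n) x | n :: int. True} = range \<iota> \<inter> L_lattice Ord)"
proof -
  have d: "d < 0" and sf: "squarefree d" using assms(3) unfolding imag_quad_param_def by auto
  have roi: "ring_of_integers d = Sd d" by (rule roi_eq_Sd[OF d sf])
  have emb: "quat_embedding a b d \<iota>" using assms(4) unfolding optimal_embeddings_def by blast
  obtain \<phi> where phibij: "bij_betw \<phi> (ring_of_integers d) (range \<iota> \<inter> Ord)"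
    and phi1: "\<phi> Eone = qof_rat 1"
    and phihom: "\<forall>z\<in>ring_of_integers d. \<forall>w\<in>ring_of_integers d.
            \<phi> (Eadd z w) = qadd (\<phi> z) (\<phi> w) \<and> \<phi> (Emul d z w) = qmul a b (\<phi> z) (\<phi> w)"
    using assms(4) unfolding optimal_embeddings_def by blast
  obtain y1 y2 y3 where yd: "a * y1^2 + b * y2^2 - a * b * y3^2 = of_int d"
    and iota: "\<forall>p q. \<iota> (p, q) = Quat p (q * y1) (q * y2) (q * y3)"
    using iota_form[OF emb d] by blast
  note op = order_props[OF assms(2)]
  interpret LS a b d \<iota> Ord y1 y2 y3 \<phi>
  proof
    show "d < 0" by (rule d)
    show "\<And>p q. \<iota> (p, q) = Quat p (q * y1) (q * y2) (q * y3)" using iota by blast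
    show "a * y1^2 + b * y2^2 - a * b * y3^2 = of_int d" by (rule yd)
    show "quat_embedding a b d \<iota>" by (rule emb)
    show "qof_rat 1 \<in> Ord" by (rule op(1))
    show "\<And>x y. x \<in> Ord \<Longrightarrow> y \<in> Ord \<Longrightarrow> qadd x y \<in> Ord" by (rule op(2))
    show "\<And>x. x \<in> Ord \<Longrightarrow> qneg x \<in> Ord" by (rule op(4))
    show "bij_betw \<phi> (Sd d) (range \<iota> \<inter> Ord)" using phibij roi by simp
    show "\<phi> Eone = qof_rat 1" by (rule phi1)
    show "\<And>z w. z \<in> Sd d \<Longrightarrow> w \<in> Sd d \<Longrightarrow>
      \<phi> (Eadd z w) = qadd (\<phi> z) (\<phi> w) \<and> \<phi> (Emul d z w) = qmul a b (\<phi> z) (\<phi> w)"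
      using phihom roi by blast
  qed
  show ?thesis using part1 part2 part3 roi by blast
qed

end
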